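(* Let $F$ be a face of $\delta\mathcal{A}_{\bm o}$, $\bm a,\bm b\in\operatorname{relint}(F)$, and $I,J,K$ a partition of $[m]$. Write $P_{\bm a}=P(\bm a,I,J,K)$ and $P_{\bm b}=P(\bm b,I,J,K)$. Then the map $\Phi$ from the face poset of $P_{\bm a}$ to that of $P_{\bm b}$ defined by $\Phi(\emptyset)=\emptyset$ and $\Phi(G)=P\big(\bm b,I_{P_{\bm a}}(G),J_{P_{\bm a}}(G),K_{P_{\bm a}}(G)\big)$ for nonempty faces $G$ is a well-defined bijection, and for each nonempty face $G$ of $P_{\bm a}$, $\Phi(G)$ is nonempty and has the same active triple index (with respect to $P_{\bm b}$) as $G$ (with respect to $P_{\bm a}$).
   Context: Fix nonzero $\bm u_1,\dots,\bm u_m\in\mathbb{R}^n$ (repetitions and parallel vectors allowed), $U$ the matrix with these rows; $U_I,\bm a_I$ denote rows/entries indexed by $I$. For a partition $I,J,K$ of $[m]$, $P(\bm a,I,J,K)=\{\bm x\in\mathbb{R}^n:U_I\bm x=\bm a_I,\ U_J\bm x\le\bm a_J,\ U_K\bm x\ge\bm a_K\}$; faces of a polyhedron include $\emptyset$ and the polyhedron itself. For a nonempty face $G$ of $P=P(\bm a,I,J,K)$: $I_P(G)=\{i\in[m]:\langle\bm u_i,\bm x\rangle=a_i\}$ for any $\bm x\in\operatorname{relint}(G)$, $J_P(G)=J\setminus I_P(G)$, $K_P(G)=K\setminus I_P(G)$; $(I_P(G),J_P(G),K_P(G))$ is the active triple index. A circuit is $C\subseteq[m]$ with $\{\bm u_i:i\in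 C\}$ a minimal linearly dependent indexed family; $\bm c^C$ satisfies $\sum c_i\bm u_i=\bm0$, $c_i\neq0\iff i\in C$. The derived arrangement $\delta\mathcal{A}_{\bm o}$ consists of the hyperplanes $\langle\bm c^C,\bm y\rangle=0$ in $\mathbb{R}^m$; its open faces are the nonempty sets $\{\bm y:\operatorname{sign}\langle \bm c^C,\bm y\rangle=\epsilon_C\ \forall C\}$, faces are their closures, and $\operatorname{relint}(F)$ is the open face with closure $F$. *)

theory Defs
  imports "HOL-Analysis.Analysis"
begin

text \<open>Vectors u_i indexed by a finite type 'm (the index set [m] is UNIV :: 'm set),
  living in real^'n.  Right-hand sides a are vectors in real^'m.\<close>

definition Pol :: "('m::finite \<Rightarrow> real^'n) \<Rightarrow> real^'m \<Rightarrow> 'm set \<Rightarrow> 'm set \<Rightarrow> 'm set \<Rightarrow> (real^'n) set" where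
  "Pol u a I J K = {x. (\<forall>i\<in>I. u i \<bullet> x = a $ i) \<and> (\<forall>i\<in>J. u i \<bullet> x \<le> a $ i)
                        \<and> (\<forall>i\<in>K. u i \<bullet> x \<ge> a $ i)}"

definition act_I :: "('m::finite \<Rightarrow> real^'n) \<Rightarrow> real^'m \<Rightarrow> (real^'n) set \<Rightarrow> 'm set" where
  "act_I u a G = {i. u i \<bullet> (SOME x. x \<in> rel_interior G) = a $ i}"

definition lin_dep_fam :: "('m::finite \<Rightarrow> real^'n) \<Rightarrow> 'm set \<Rightarrow> bool" where
  "lin_dep_fam u C = (\<exists>c. (\<Sum>i\<in>C. c i *\<^sub>R u i) = 0 \<and> (\<exists>i\<in>C. c i \<noteq> 0))"

definition circuit :: "('m::finite \<Rightarrow> real^'n) \<Rightarrow> 'm set \<Rightarrow> bool" where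
  "circuit u C = (lin_dep_fam u C \<and> (\<forall>D. D \<subset> C \<longrightarrow> \<not> lin_dep_fam u D))"

definition circuit_vec :: "('m::finite \<Rightarrow> real^'n) \<Rightarrow> 'm set \<Rightarrow> real^'m" where
  "circuit_vec u C = (SOME c. (\<Sum>i\<in>UNIV. (c $ i) *\<^sub>R u i) = 0 \<and> (\<forall>i. c $ i \<noteq> 0 \<longleftrightarrow> i \<in> C))"

definition derived_open_face :: "('m::finite \<Rightarrow> real^'n) \<Rightarrow> (real^'m) set \<Rightarrow> bool" where
  "derived_open_face u S = (S \<noteq> {} \<and> (\<exists>\<epsilon> :: 'm set \<Rightarrow> real.
      S = {y. \<forall>C. circuit u C \<longrightarrow> sgn (circuit_vec u C \<bullet> y) = \<epsilon> C}))"

definition derived_face :: "('m::finite \<Rightarrow> real^'n) \<Rightarrow> (real^'m) set \<Rightarrow> bool" where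
  "derived_face u F = (\<exists>S. derived_open_face u S \<and> F = closure S)"

definition derived_relint :: "('m::finite \<Rightarrow> real^'n) \<Rightarrow> (real^'m) set \<Rightarrow> (real^'m) set" where
  "derived_relint u F = (THE S. derived_open_face u S \<and> closure S = F)"

definition Phi :: "('m::finite \<Rightarrow> real^'n) \<Rightarrow> real^'m \<Rightarrow> real^'m \<Rightarrow> 'm set \<Rightarrow> 'm set
                    \<Rightarrow> (real^'n) set \<Rightarrow> (real^'n) set" where
  "Phi u a b J K G = (if G = {} then {}
      else Pol u b (act_I u a G) (J - act_I u a G) (K - act_I u a G))"

end

theory Submission
  imports Defs
begin



lemma sum_option: "(\<Sum>k\<in>(UNIV::'a::finite option set). f k) = f None + (\<Sum>i\<in>UNIV. f (Some i))"
  by (simp add: UNIV_option_conv sum.reindex)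

definition wv :: "('m::finite \<Rightarrow> real^'n) \<Rightarrow> real^'m \<Rightarrow> 'm option \<Rightarrow> ((real^'n) \<times> real)" where
  "wv u y k = (case k of Some i \<Rightarrow> (u i, - (y$i)) | None \<Rightarrow> (0, 1))"

definition sg :: "('m \<Rightarrow> real) \<Rightarrow> 'm option \<Rightarrow> real" where
  "sg \<sigma> k = (case k of Some i \<Rightarrow> \<sigma> i | None \<Rightarrow> 1)"

definition kerW :: "('m::finite \<Rightarrow> real^'n) \<Rightarrow> real^'m \<Rightarrow> ('m option \<Rightarrow> real) \<Rightarrow> bool" where
  "kerW u y e \<longleftrightarrow> (\<Sum>k\<in>UNIV. e k *\<^sub>R wv u y k) = 0"

definition certW :: "('m::finite \<Rightarrow> real^'n) \<Rightarrow> real^'m \<Rightarrow> 'm set \<Rightarrow> ('m \<Rightarrow> real) \<Rightarrow> ('m option \<Rightarrow> real) \<Rightarrow> bool" where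
  "certW u y N \<sigma> e \<longleftrightarrow> kerW u y e \<and> (\<forall>k\<in>insert None (Some ` N). 0 \<le> e k * sg \<sigma> k)
      \<and> (\<exists>k\<in>insert None (Some ` N). e k \<noteq> 0)"

definition meas :: "('m::finite option \<Rightarrow> real) \<Rightarrow> nat" where
  "meas e = 2 * card {i. e (Some i) \<noteq> 0} + (if e None \<noteq> 0 then 1 else 0)"

lemma kerW_iff: "kerW u y e \<longleftrightarrow> (\<Sum>i\<in>UNIV. e (Some i) *\<^sub>R u i) = 0 \<and> e None = (\<Sum>i\<in>UNIV. e (Some i) * y$i)"
proof -
  have "(\<Sum>k\<in>UNIV. e k *\<^sub>R wv u y k) = (\<Sum>i\<in>UNIV. e (Some i) *\<^sub>R u i, e None - (\<Sum>i\<in>UNIV. e (Some i) * y$i))"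
    by (simp add: sum_option wv_def prod_eq_iff fst_sum snd_sum sum_negf)
  then show ?thesis unfolding kerW_def by (auto simp: prod_eq_iff)
qed

lemma kerW_lin: "kerW u y e \<Longrightarrow> kerW u y c \<Longrightarrow> kerW u y (\<lambda>k. e k - t * c k)"
proof -
  assume h: "kerW u y e" "kerW u y c"
  have "(\<Sum>k\<in>UNIV. (t * c k) *\<^sub>R wv u y k) = t *\<^sub>R (\<Sum>k\<in>UNIV. c k *\<^sub>R wv u y k)"
    by (simp add: scaleR_sum_right)
  then show ?thesis using h unfolding kerW_def by (simp add: scaleR_diff_left sum_subtractf)
qed

lemma kerW_neg: "kerW u y c \<Longrightarrow> kerW u y (\<lambda>k. - c k)"
  unfolding kerW_def by (simp add: sum_negf)

lemma pivot:
  fixes e c :: "'k::finite \<Rightarrow> real"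
  assumes "\<exists>k. c k * e k > 0"
  obtains t where "t > 0" "\<forall>k. (e k - t * c k) * e k \<ge> 0"
    "\<forall>k. c k * e k < 0 \<longrightarrow> (e k - t*c k) * e k > 0"
    "\<exists>k0. c k0 * e k0 > 0 \<and> e k0 - t * c k0 = 0"
proof -
  define Q where "Q = {k. c k * e k > 0}"
  have Qne: "Q \<noteq> {}" using assms Q_def by auto
  define t where "t = Min ((\<lambda>k. e k / c k) ` Q)"
  have fin: "finite ((\<lambda>k. e k / c k) ` Q)" by simp
  have pos: "e k / c k > 0" if "k \<in> Q" for k
  proof -
    have "c k * e k > 0" using that Q_def by auto
    then show ?thesis by (auto simp: zero_less_mult_iff zero_less_divide_iff)
  qed
  have "t \<in> (\<lambda>k. e k / c k) ` Q" using Min_in[OF fin] Qne t_def by blast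
  then obtain k0 where k0: "k0 \<in> Q" "t = e k0 / c k0" by blast
  have tle: "t \<le> e k / c k" if "k \<in> Q" for k using Min_le[OF fin] that t_def by auto
  have tpos: "t > 0" using pos k0 by auto
  have A: "(e k - t * c k) * e k \<ge> 0" for k
  proof (cases "k \<in> Q")
    case True
    have ce: "c k * e k > 0" using True Q_def by auto
    then have cnz: "c k \<noteq> 0" by auto
    have "t * (c k * e k) \<le> (e k / c k) * (c k * e k)"
      using tle[OF True] ce by (intro mult_right_mono) auto
    also have "\<dots> = e k * e k" using cnz by (simp add: field_simps)
    finally show ?thesis by (simp add: algebra_simps)
  next
    case False
    then have "c k * e k \<le> 0" using Q_def by auto
    then have "t * (c k * e k) \<le> 0" using tpos by (simp add: mult_nonneg_nonpos)
    moreover have "e k * e k \<ge> 0" by simp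
    moreover have "(e k - t*c k)*e k = e k*e k - t*(c k*e k)" by (simp add: algebra_simps)
    ultimately show ?thesis by linarith
  qed
  have B: "c k * e k < 0 \<longrightarrow> (e k - t*c k) * e k > 0" for k
  proof
    assume "c k * e k < 0"
    then have "t * (c k * e k) < 0" using tpos by (simp add: mult_pos_neg)
    moreover have "e k * e k \<ge> 0" by simp
    moreover have "(e k - t*c k)*e k = e k*e k - t*(c k*e k)" by (simp add: algebra_simps)
    ultimately show "(e k - t*c k) * e k > 0" by linarith
  qed
  have C: "c k0 * e k0 > 0 \<and> e k0 - t * c k0 = 0"
    using k0 Q_def by auto
  show ?thesis using that tpos A B C by blast
qed

lemma sign_trans: "(x::real) * y \<ge> 0 \<Longrightarrow> y * s > 0 \<Longrightarrow> x * s \<ge> 0"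
proof -
  assume h: "x * y \<ge> 0" "y * s > 0"
  have "(x * s) * (y * s) = (x * y) * (s * s)" by (simp add: algebra_simps)
  also have "\<dots> \<ge> 0" using h by simp
  finally show ?thesis using h(2) by (simp add: zero_le_mult_iff)
qed




lemma meas_less:
  fixes e e' :: "'m::finite option \<Rightarrow> real"
  assumes "{k. e' k \<noteq> 0} \<subset> {k. e k \<noteq> 0}"
  shows "meas e' < meas e"
proof -
  have sub: "{i. e' (Some i) \<noteq> 0} \<subseteq> {i. e (Some i) \<noteq> 0}" using assms by auto
  have nn: "e' None \<noteq> 0 \<Longrightarrow> e None \<noteq> 0" using assms by auto
  obtain k where k: "e k \<noteq> 0" "e' k = 0" using assms by auto
  show ?thesis
  proof (cases k)
    case None
    then have "card {i. e' (Some i) \<noteq> 0} \<le> card {i. e (Some i) \<noteq> 0}"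
      using sub by (simp add: card_mono)
    then show ?thesis using k None unfolding meas_def by auto
  next
    case (Some i)
    then have "{i. e' (Some i) \<noteq> 0} \<subset> {i. e (Some i) \<noteq> 0}" using sub k by auto
    then have "card {i. e' (Some i) \<noteq> 0} < card {i. e (Some i) \<noteq> 0}"
      by (simp add: psubset_card_mono)
    then show ?thesis unfolding meas_def by auto
  qed
qed

lemma sg_pm: "\<forall>i\<in>N. \<sigma> i = 1 \<or> \<sigma> i = -1 \<Longrightarrow> k \<in> insert None (Some ` N) \<Longrightarrow> sg \<sigma> k = 1 \<or> sg \<sigma> k = -1"
  by (auto simp: sg_def)

lemma step:
  fixes u :: "'m::finite \<Rightarrow> real^'n"
  assumes \<sigma>: "\<forall>i\<in>N. \<sigma> i = 1 \<or> \<sigma> i = -1" and cert: "certW u y N \<sigma> e" and kc: "kerW u y c"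
   and sub: "{i. c (Some i) \<noteq> 0} \<subset> {i. e (Some i) \<noteq> 0}" and nz: "\<exists>i. c (Some i) \<noteq> 0"
  shows "\<exists>e'. certW u y N \<sigma> e' \<and> meas e' < meas e"
proof -
  define N' where "N' = insert None (Some ` N)"
  have sN: "sg \<sigma> k = 1 \<or> sg \<sigma> k = -1" if "k \<in> N'" for k using sg_pm[OF \<sigma>] that N'_def by auto
  have ke: "kerW u y e" and conf: "\<forall>k\<in>N'. 0 \<le> e k * sg \<sigma> k" and enz: "\<exists>k\<in>N'. e k \<noteq> 0"
    using cert unfolding certW_def N'_def by auto
  have epos: "e k * sg \<sigma> k > 0" if "k \<in> N'" "e k \<noteq> 0" for k
    using sN[OF that(1)] conf that by auto
  have csub: "c (Some i) \<noteq> 0 \<Longrightarrow> e (Some i) \<noteq> 0" for i using sub by auto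
  have cert_iff: "certW u y N \<sigma> f \<longleftrightarrow> kerW u y f \<and> (\<forall>k\<in>N'. 0 \<le> f k * sg \<sigma> k) \<and> (\<exists>k\<in>N'. f k \<noteq> 0)" for f
    unfolding certW_def N'_def by auto
  have None_in: "None \<in> N'" unfolding N'_def by auto
  have sgNone: "sg \<sigma> None = 1" by (simp add: sg_def)
  show ?thesis
  proof (cases "e None = 0 \<and> c None \<noteq> 0")
    case True
    define c1 where "c1 = (\<lambda>k. if c None > 0 then - c k else c k)"
    have kc1: "kerW u y c1"
    proof (cases "c None > 0")
      case True then show ?thesis using kerW_neg[OF kc] unfolding c1_def by simp
    next
      case False then show ?thesis using kc unfolding c1_def by simp
    qed
    have c1None: "c1 None < 0" using True unfolding c1_def by auto
    have c1nz: "c1 k \<noteq> 0 \<longleftrightarrow> c k \<noteq> 0" for k unfolding c1_def by auto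
    show ?thesis
    proof (cases "\<exists>k. c1 k * e k > 0")
      case True
      obtain t where t: "t > 0" "\<forall>k. (e k - t * c1 k) * e k \<ge> 0"
        "\<exists>k0. c1 k0 * e k0 > 0 \<and> e k0 - t * c1 k0 = 0"
        using pivot[OF True] by metis
      define e' where "e' = (\<lambda>k. e k - t * c1 k)"
      have ke': "kerW u y e'" unfolding e'_def by (rule kerW_lin[OF ke kc1])
      have e'None: "e' None > 0" using c1None t(1) \<open>e None = 0 \<and> c None \<noteq> 0\<close> unfolding e'_def
        by (simp add: mult_pos_neg)
      have conf': "\<forall>k\<in>N'. 0 \<le> e' k * sg \<sigma> k"
      proof
        fix k assume kN: "k \<in> N'"
        show "0 \<le> e' k * sg \<sigma> k"
        proof (cases "e k = 0")
          case True
          show ?thesis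
          proof (cases k)
            case None then show ?thesis using e'None sgNone by simp
          next
            case (Some i)
            then have "c (Some i) = 0" using csub True by auto
            then have "c1 (Some i) = 0" using c1nz by blast
            then show ?thesis using True Some unfolding e'_def by auto
          qed
        next
          case False
          show ?thesis using sign_trans[of "e' k" "e k" "sg \<sigma> k"] t(2) epos[OF kN False]
            unfolding e'_def by auto
        qed
      qed
      obtain k0 where k0: "c1 k0 * e k0 > 0" "e k0 - t * c1 k0 = 0" using t(3) by blast
      have "k0 \<noteq> None"
      proof
        assume "k0 = None"
        then show False using k0(1) \<open>e None = 0 \<and> c None \<noteq> 0\<close> by simp
      qed
      then obtain i0 where i0: "k0 = Some i0" by auto
      have supp: "{i. e' (Some i) \<noteq> 0} \<subseteq> {i. e (Some i) \<noteq> 0} - {i0}"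
      proof
        fix i assume "i \<in> {i. e' (Some i) \<noteq> 0}"
        then have h: "e' (Some i) \<noteq> 0" by simp
        have "e (Some i) \<noteq> 0"
        proof
          assume ez: "e (Some i) = 0"
          then have "c (Some i) = 0" using csub by blast
          then have "c1 (Some i) = 0" using c1nz by blast
          then show False using h ez unfolding e'_def by simp
        qed
        moreover have "i \<noteq> i0" using h k0 i0 unfolding e'_def by auto
        ultimately show "i \<in> {i. e (Some i) \<noteq> 0} - {i0}" by simp
      qed
      have "i0 \<in> {i. e (Some i) \<noteq> 0}" using k0 i0 by auto
      then have "{i. e' (Some i) \<noteq> 0} \<subset> {i. e (Some i) \<noteq> 0}" using supp by blast
      then have "card {i. e' (Some i) \<noteq> 0} < card {i. e (Some i) \<noteq> 0}"
        by (simp add: psubset_card_mono)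
      then have "meas e' < meas e" using \<open>e None = 0 \<and> c None \<noteq> 0\<close> unfolding meas_def by auto
      moreover have "certW u y N \<sigma> e'" unfolding cert_iff
      proof (intro conjI)
        show "\<exists>k\<in>N'. e' k \<noteq> 0" using e'None None_in by (intro bexI[of _ None]) auto
      qed (use ke' conf' in auto)
      ultimately show ?thesis by blast
    next
      case False
      define e' where "e' = (\<lambda>k. - c1 k)"
      have ke': "kerW u y e'" unfolding e'_def by (rule kerW_neg[OF kc1])
      have e'None: "e' None > 0" using c1None unfolding e'_def by simp
      have conf': "\<forall>k\<in>N'. 0 \<le> e' k * sg \<sigma> k"
      proof
        fix k assume kN: "k \<in> N'"
        show "0 \<le> e' k * sg \<sigma> k"
        proof (cases "c1 k = 0")
          case True then show ?thesis unfolding e'_def by simp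
        next
          case cnz: False
          show ?thesis
          proof (cases k)
            case None then show ?thesis using e'None sgNone by simp
          next
            case (Some i)
            then have enz: "e k \<noteq> 0" using csub cnz c1nz by auto
            have "c1 k * e k \<le> 0" using False by (simp add: not_less)
            then have "e' k * e k \<ge> 0" unfolding e'_def by simp
            then show ?thesis using sign_trans[of "e' k" "e k" "sg \<sigma> k"] epos[OF kN enz] by auto
          qed
        qed
      qed
      have "{i. e' (Some i) \<noteq> 0} = {i. c (Some i) \<noteq> 0}" using c1nz unfolding e'_def by auto
      then have "card {i. e' (Some i) \<noteq> 0} < card {i. e (Some i) \<noteq> 0}"
        using sub by (simp add: psubset_card_mono)
      then have "meas e' < meas e" using \<open>e None = 0 \<and> c None \<noteq> 0\<close> unfolding meas_def by auto
      moreover have "certW u y N \<sigma> e'" unfolding cert_iff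
      proof (intro conjI)
        show "\<exists>k\<in>N'. e' k \<noteq> 0" using e'None None_in by (intro bexI[of _ None]) auto
      qed (use ke' conf' in auto)
      ultimately show ?thesis by blast
    qed
  next
    case False
    have cW: "c k \<noteq> 0 \<Longrightarrow> e k \<noteq> 0" for k
      using False csub by (cases k) auto
    obtain i1 where i1: "c (Some i1) \<noteq> 0" using nz by blast
    have strict: "{k. c k \<noteq> 0} \<subset> {k. e k \<noteq> 0}"
    proof -
      obtain i where i: "e (Some i) \<noteq> 0" "c (Some i) = 0" using sub by auto
      have "{k. c k \<noteq> 0} \<subseteq> {k. e k \<noteq> 0}" using cW by blast
      moreover have "Some i \<in> {k. e k \<noteq> 0}" "Some i \<notin> {k. c k \<noteq> 0}" using i by auto
      ultimately show ?thesis by blast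
    qed
    show ?thesis
    proof (cases "\<forall>k\<in>N'. c k = 0")
      case True
      define t where "t = e (Some i1) / c (Some i1)"
      define e' where "e' = (\<lambda>k. e k - t * c k)"
      have ke': "kerW u y e'" unfolding e'_def by (rule kerW_lin[OF ke kc])
      have eqN: "\<forall>k\<in>N'. e' k = e k" using True unfolding e'_def by simp
      have "certW u y N \<sigma> e'" unfolding cert_iff
      proof (intro conjI)
        show "\<forall>k\<in>N'. 0 \<le> e' k * sg \<sigma> k" using conf eqN by simp
        show "\<exists>k\<in>N'. e' k \<noteq> 0" using enz eqN by simp
      qed (use ke' in auto)
      moreover have "{k. e' k \<noteq> 0} \<subset> {k. e k \<noteq> 0}"
      proof -
        have "{k. e' k \<noteq> 0} \<subseteq> {k. e k \<noteq> 0}"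
        proof (rule subsetI, rule ccontr)
          fix k assume "k \<in> {k. e' k \<noteq> 0}" "k \<notin> {k. e k \<noteq> 0}"
          then show False using cW[of k] unfolding e'_def by auto
        qed
        moreover have "e' (Some i1) = 0" using i1 unfolding e'_def t_def by simp
        moreover have "e (Some i1) \<noteq> 0" using i1 cW by blast
        ultimately show ?thesis by blast
      qed
      ultimately show ?thesis using meas_less[of e' e] by blast
    next
      case notall0: False
      show ?thesis
      proof (cases "\<forall>k\<in>N'. 0 \<le> c k * sg \<sigma> k")
        case True
        have nz0: "\<exists>k\<in>N'. c k \<noteq> 0" using notall0 by blast
        have "certW u y N \<sigma> c" unfolding cert_iff using True nz0 kc by (intro conjI)
        then show ?thesis using meas_less[OF strict] by blast
      next
        case F1: False
        show ?thesis
        proof (cases "\<forall>k\<in>N'. 0 \<le> (- c k) * sg \<sigma> k")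
          case True
          have nz0: "\<exists>k\<in>N'. - c k \<noteq> 0" using notall0 by auto
          have "certW u y N \<sigma> (\<lambda>k. - c k)" unfolding cert_iff using True nz0 kerW_neg[OF kc] by (intro conjI)
          moreover have "{k. - c k \<noteq> 0} \<subset> {k. e k \<noteq> 0}" using strict by simp
          then have "meas (\<lambda>k. - c k) < meas e" by (rule meas_less)
          ultimately show ?thesis by blast
        next
          case F2: False
          obtain j where j: "j \<in> N'" "c j * sg \<sigma> j < 0" using F1 by (auto simp: not_le)
          obtain j' where j': "j' \<in> N'" "c j' * sg \<sigma> j' > 0" using F2 by (auto simp: not_le)
          have "c j \<noteq> 0" using j(2) by auto
          then have "e j \<noteq> 0" using cW by blast
          then have ej: "e j * sg \<sigma> j > 0" using epos[OF j(1)] by blast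
          have "c j' \<noteq> 0" using j'(2) by auto
          then have "e j' \<noteq> 0" using cW by blast
          then have ej': "e j' * sg \<sigma> j' > 0" using epos[OF j'(1)] by blast
          have s2: "sg \<sigma> k * sg \<sigma> k = 1" if "k \<in> N'" for k using sN[OF that] by auto
          have prodsg: "c k * e k = (c k * sg \<sigma> k) * (e k * sg \<sigma> k)" if "k \<in> N'" for k
          proof -
            have "(c k * sg \<sigma> k) * (e k * sg \<sigma> k) = c k * e k * (sg \<sigma> k * sg \<sigma> k)" by (simp add: algebra_simps)
            then show ?thesis using s2[OF that] by simp
          qed
          have "(c j' * sg \<sigma> j') * (e j' * sg \<sigma> j') > 0" using j'(2) ej' by (rule mult_pos_pos)
          then have cej': "c j' * e j' > 0" by (subst prodsg[OF j'(1)])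
          have "(c j * sg \<sigma> j) * (e j * sg \<sigma> j) < 0" using j(2) ej by (rule mult_neg_pos)
          then have cej: "c j * e j < 0" by (subst prodsg[OF j(1)])
          obtain t where t: "t > 0" "\<forall>k. (e k - t * c k) * e k \<ge> 0"
            "\<forall>k. c k * e k < 0 \<longrightarrow> (e k - t*c k) * e k > 0"
            "\<exists>k0. c k0 * e k0 > 0 \<and> e k0 - t * c k0 = 0"
            using pivot[of c e] cej' by metis
          define e' where "e' = (\<lambda>k. e k - t * c k)"
          have ke': "kerW u y e'" unfolding e'_def by (rule kerW_lin[OF ke kc])
          have conf': "\<forall>k\<in>N'. 0 \<le> e' k * sg \<sigma> k"
          proof
            fix k assume kN: "k \<in> N'"
            show "0 \<le> e' k * sg \<sigma> k"
            proof (cases "e k = 0")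
              case True then have "c k = 0" using cW by auto
              then show ?thesis using True unfolding e'_def by simp
            next
              case False
              show ?thesis using sign_trans[of "e' k" "e k" "sg \<sigma> k"] t(2) epos[OF kN False]
                unfolding e'_def by auto
            qed
          qed
          have "(e j - t*c j)*e j > 0" using t(3) cej by blast
          then have "e' j \<noteq> 0" unfolding e'_def by auto
          then have "certW u y N \<sigma> e'" unfolding cert_iff using ke' conf' j(1) by blast
          moreover have "{k. e' k \<noteq> 0} \<subset> {k. e k \<noteq> 0}"
          proof -
            have "{k. e' k \<noteq> 0} \<subseteq> {k. e k \<noteq> 0}"
            proof (rule subsetI, rule ccontr)
              fix k assume "k \<in> {k. e' k \<noteq> 0}" "k \<notin> {k. e k \<noteq> 0}"
              then show False using cW[of k] unfolding e'_def by auto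
            qed
            moreover obtain k0 where k0: "c k0 * e k0 > 0" "e k0 - t * c k0 = 0" using t(4) by blast
            have "e' k0 = 0" using k0 unfolding e'_def by simp
            moreover have "e k0 \<noteq> 0" using k0 by auto
            ultimately show ?thesis by blast
          qed
          ultimately show ?thesis using meas_less[of e' e] by blast
        qed
      qed
    qed
  qed
qed




lemma reduce:
  fixes u :: "'m::finite \<Rightarrow> real^'n"
  assumes \<sigma>: "\<forall>i\<in>N. \<sigma> i = 1 \<or> \<sigma> i = -1" and ce: "certW u y N \<sigma> e"
  shows "\<exists>e'. certW u y N \<sigma> e' \<and> circuit u {i. e' (Some i) \<noteq> 0}"
  using ce
proof (induction "meas e" arbitrary: e rule: less_induct)
  case less
  show ?case
  proof (cases "circuit u {i. e (Some i) \<noteq> 0}")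
    case True then show ?thesis using less.prems by blast
  next
    case False
    define C where "C = {i. e (Some i) \<noteq> 0}"
    have ke: "kerW u y e" and enz: "\<exists>k\<in>insert None (Some ` N). e k \<noteq> 0"
      using less.prems unfolding certW_def by auto
    have sumU: "(\<Sum>i\<in>UNIV. e (Some i) *\<^sub>R u i) = 0" and eN: "e None = (\<Sum>i\<in>UNIV. e (Some i) * y$i)"
      using ke kerW_iff by blast+
    have Cne: "C \<noteq> {}"
    proof
      assume "C = {}"
      then have z: "\<And>i. e (Some i) = 0" unfolding C_def by auto
      then have "e None = 0" using eN by simp
      then show False using enz z by auto
    qed
    have "lin_dep_fam u C" unfolding lin_dep_fam_def
    proof (intro exI conjI)
      show "(\<Sum>i\<in>C. e (Some i) *\<^sub>R u i) = 0"
        using sumU by (subst sum.mono_neutral_left[of UNIV C]) (auto simp: C_def)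
      show "\<exists>i\<in>C. e (Some i) \<noteq> 0" using Cne unfolding C_def by auto
    qed
    then obtain D where D: "D \<subset> C" "lin_dep_fam u D" using False unfolding circuit_def C_def by blast
    then obtain c0 i1 where c0: "(\<Sum>i\<in>D. c0 i *\<^sub>R u i) = 0" "i1 \<in> D" "c0 i1 \<noteq> 0"
      unfolding lin_dep_fam_def by blast
    define c0' where "c0' i = (if i \<in> D then c0 i else 0)" for i
    define c where "c = (\<lambda>k. case k of Some i \<Rightarrow> c0' i | None \<Rightarrow> (\<Sum>i\<in>UNIV. c0' i * y$i))"
    have "(\<Sum>i\<in>UNIV. c0' i *\<^sub>R u i) = (\<Sum>i\<in>UNIV. if i \<in> D then c0 i *\<^sub>R u i else 0)"
      unfolding c0'_def by (rule sum.cong) auto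
    also have "\<dots> = (\<Sum>i\<in>D. c0 i *\<^sub>R u i)" using sum.inter_restrict[of UNIV "\<lambda>i. c0 i *\<^sub>R u i" D] by simp
    finally have "(\<Sum>i\<in>UNIV. c0' i *\<^sub>R u i) = 0" using c0 by simp
    then have kc: "kerW u y c" unfolding kerW_iff c_def by simp
    have "{i. c (Some i) \<noteq> 0} \<subseteq> D" unfolding c_def c0'_def by auto
    then have sub: "{i. c (Some i) \<noteq> 0} \<subset> {i. e (Some i) \<noteq> 0}" using D(1) C_def by blast
    have nz: "\<exists>i. c (Some i) \<noteq> 0" using c0 unfolding c_def c0'_def by auto
    obtain e' where e': "certW u y N \<sigma> e'" "meas e' < meas e"
      using step[OF \<sigma> less.prems kc sub nz] by blast
    show ?thesis using less.hyps[OF e'(2) e'(1)] .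
  qed
qed




definition feasW :: "('m::finite \<Rightarrow> real^'n) \<Rightarrow> real^'m \<Rightarrow> 'm set \<Rightarrow> ('m \<Rightarrow> real) \<Rightarrow> bool" where
  "feasW u y N \<sigma> \<longleftrightarrow> (\<exists>z. (\<forall>i. i \<notin> N \<longrightarrow> wv u y (Some i) \<bullet> z = 0)
     \<and> (\<forall>k\<in>insert None (Some ` N). sg \<sigma> k * (wv u y k \<bullet> z) > 0))"

lemma cert_not_feas:
  fixes u :: "'m::finite \<Rightarrow> real^'n"
  assumes \<sigma>: "\<forall>i\<in>N. \<sigma> i = 1 \<or> \<sigma> i = -1" and ce: "certW u y N \<sigma> e"
  shows "\<not> feasW u y N \<sigma>"
proof
  assume "feasW u y N \<sigma>"
  then obtain z where z0: "\<forall>i. i \<notin> N \<longrightarrow> wv u y (Some i) \<bullet> z = 0"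
    and z1: "\<forall>k\<in>insert None (Some ` N). sg \<sigma> k * (wv u y k \<bullet> z) > 0"
    unfolding feasW_def by blast
  define N' where "N' = insert None (Some ` N)"
  have sN: "sg \<sigma> k * sg \<sigma> k = 1" if "k \<in> N'" for k using sg_pm[OF \<sigma>, of k] that N'_def by auto
  have ke: "kerW u y e" and conf: "\<forall>k\<in>N'. 0 \<le> e k * sg \<sigma> k" and enz: "\<exists>k\<in>N'. e k \<noteq> 0"
    using ce unfolding certW_def N'_def by auto
  define h where "h k = e k * (wv u y k \<bullet> z)" for k
  have "(\<Sum>k\<in>UNIV. h k) = (\<Sum>k\<in>UNIV. e k *\<^sub>R wv u y k) \<bullet> z"
    unfolding h_def by (simp add: inner_sum_left)
  also have "\<dots> = 0" using ke unfolding kerW_def by simp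
  finally have sum0: "(\<Sum>k\<in>UNIV. h k) = 0" .
  have hprod: "h k = (e k * sg \<sigma> k) * (sg \<sigma> k * (wv u y k \<bullet> z))" if "k \<in> N'" for k
  proof -
    have "(e k * sg \<sigma> k) * (sg \<sigma> k * (wv u y k \<bullet> z)) = h k * (sg \<sigma> k * sg \<sigma> k)"
      unfolding h_def by (simp add: algebra_simps)
    then show ?thesis using sN[OF that] by simp
  qed
  have hnn: "h k \<ge> 0" for k
  proof (cases "k \<in> N'")
    case True
    have "e k * sg \<sigma> k \<ge> 0" using conf True by blast
    moreover have "sg \<sigma> k * (wv u y k \<bullet> z) > 0" using z1 True N'_def by blast
    ultimately show ?thesis using hprod[OF True] by simp
  next
    case False
    then obtain i where "k = Some i" "i \<notin> N" unfolding N'_def by (cases k) auto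
    then show ?thesis using z0 unfolding h_def by simp
  qed
  obtain k where k: "k \<in> N'" "e k \<noteq> 0" using enz by blast
  have "e k * sg \<sigma> k \<noteq> 0" using k sN[OF k(1)] by auto
  then have "e k * sg \<sigma> k > 0" using conf k by (simp add: order_le_neq_trans)
  moreover have "sg \<sigma> k * (wv u y k \<bullet> z) > 0" using z1 k(1) N'_def by blast
  ultimately have "h k > 0" using hprod[OF k(1)] by simp
  then have "(\<Sum>k\<in>UNIV. h k) > 0" using hnn by (intro sum_pos2[of UNIV k]) auto
  then show False using sum0 by simp
qed




lemma motzkin:
  fixes u :: "'m::finite \<Rightarrow> real^'n"
  assumes \<sigma>: "\<forall>i\<in>N. \<sigma> i = 1 \<or> \<sigma> i = -1" and nf: "\<not> feasW u y N \<sigma>"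
  shows "\<exists>e. certW u y N \<sigma> e"
proof -
  define N' where "N' = insert None (Some ` N)"
  have sN: "sg \<sigma> k * sg \<sigma> k = 1" if "k \<in> N'" for k using sg_pm[OF \<sigma>, of k] that N'_def by auto
  define w where "w = wv u y"
  define f where "f k = sg \<sigma> k *\<^sub>R w k" for k
  define P where "P = {(\<Sum>k\<in>N'. \<mu> k *\<^sub>R f k) | \<mu>. (\<forall>k\<in>N'. \<mu> k \<ge> 0) \<and> sum \<mu> N' = 1}"
  define L where "L = {(\<Sum>i\<in>-N. l i *\<^sub>R w (Some i)) | l. True}"
  define P0 where "P0 = convex hull (f ` N')"
  define S where "S = (\<Union>x\<in>P0. \<Union>y\<in>L. {x + y})"
  have finN': "finite N'" by simp
  have Lmem: "(\<Sum>i\<in>-N. l i *\<^sub>R w (Some i)) \<in> L" for l unfolding L_def by blast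
  have convP: "convex P" unfolding convex_def
  proof (intro ballI allI impI)
    fix x1 x2 and a b :: real
    assume x1: "x1 \<in> P" and x2: "x2 \<in> P" and ab: "0 \<le> a" "0 \<le> b" "a + b = 1"
    obtain \<mu>1 where m1: "x1 = (\<Sum>k\<in>N'. \<mu>1 k *\<^sub>R f k)" "\<forall>k\<in>N'. \<mu>1 k \<ge> 0" "sum \<mu>1 N' = 1"
      using x1 P_def by blast
    obtain \<mu>2 where m2: "x2 = (\<Sum>k\<in>N'. \<mu>2 k *\<^sub>R f k)" "\<forall>k\<in>N'. \<mu>2 k \<ge> 0" "sum \<mu>2 N' = 1"
      using x2 P_def by blast
    define \<mu> where "\<mu> k = a * \<mu>1 k + b * \<mu>2 k" for k
    have "a *\<^sub>R x1 + b *\<^sub>R x2 = (\<Sum>k\<in>N'. \<mu> k *\<^sub>R f k)"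
      unfolding m1 m2 \<mu>_def by (simp add: scaleR_sum_right scaleR_add_left sum.distrib)
    moreover have "\<forall>k\<in>N'. \<mu> k \<ge> 0" using m1 m2 ab unfolding \<mu>_def by simp
    moreover have "sum \<mu> N' = 1" using m1 m2 ab unfolding \<mu>_def
      by (simp add: sum.distrib sum_distrib_left[symmetric])
    ultimately show "a *\<^sub>R x1 + b *\<^sub>R x2 \<in> P" unfolding P_def by blast
  qed
  have fP: "f k \<in> P" if "k \<in> N'" for k
  proof -
    define \<mu> where "\<mu> j = (if j = k then 1 else 0::real)" for j
    have "(\<Sum>j\<in>N'. \<mu> j *\<^sub>R f j) = (\<Sum>j\<in>N'. if j = k then f j else 0)"
      unfolding \<mu>_def by (rule sum.cong) auto
    also have "\<dots> = f k" using that by simp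
    finally have "f k = (\<Sum>j\<in>N'. \<mu> j *\<^sub>R f j)" by simp
    moreover have "sum \<mu> N' = 1" using that unfolding \<mu>_def by simp
    moreover have "\<forall>j\<in>N'. \<mu> j \<ge> 0" unfolding \<mu>_def by simp
    ultimately show ?thesis unfolding P_def by blast
  qed
  have P0P: "P0 \<subseteq> P" unfolding P0_def using fP convP by (intro hull_minimal) auto
  have subL: "subspace L" unfolding subspace_def
  proof (intro conjI ballI allI)
    show "0 \<in> L" using Lmem[of "\<lambda>_. 0"] by simp
  next
    fix x1 x2 assume "x1 \<in> L" "x2 \<in> L"
    then obtain l1 l2 where "x1 = (\<Sum>i\<in>-N. l1 i *\<^sub>R w (Some i))" "x2 = (\<Sum>i\<in>-N. l2 i *\<^sub>R w (Some i))"
      unfolding L_def by blast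
    then have "x1 + x2 = (\<Sum>i\<in>-N. (l1 i + l2 i) *\<^sub>R w (Some i))"
      by (simp add: scaleR_add_left sum.distrib)
    then show "x1 + x2 \<in> L" using Lmem[of "\<lambda>i. l1 i + l2 i"] by simp
  next
    fix c :: real and x assume "x \<in> L"
    then obtain l1 where "x = (\<Sum>i\<in>-N. l1 i *\<^sub>R w (Some i))" unfolding L_def by blast
    then have "c *\<^sub>R x = (\<Sum>i\<in>-N. (c * l1 i) *\<^sub>R w (Some i))"
      by (simp add: scaleR_sum_right)
    then show "c *\<^sub>R x \<in> L" using Lmem[of "\<lambda>i. c * l1 i"] by simp
  qed
  have cS: "closed S" unfolding S_def P0_def
    by (intro compact_closed_sums compact_convex_hull finite_imp_compact closed_subspace subL) simp
  have vS: "convex S" unfolding S_def P0_def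
    by (intro convex_sums convex_convex_hull subspace_imp_convex subL)
  have "0 \<in> S"
  proof (rule ccontr)
    assume "0 \<notin> S"
    then obtain a bb where ab: "a \<noteq> 0" "0 < bb" "\<forall>x\<in>S. inner a x > bb"
      using separating_hyperplane_closed_0[OF vS cS] by blast
    have fin: "f k \<in> P0" if "k \<in> N'" for k unfolding P0_def using that by (simp add: hull_inc)
    have "0 \<in> L" using subL by (simp add: subspace_0)
    then have Sf: "f k \<in> S" if "k \<in> N'" for k using fin[OF that] unfolding S_def by force
    have L1: "r *\<^sub>R w (Some i) \<in> L" if "i \<notin> N" for i r
    proof -
      have "(\<Sum>j\<in>-N. (if j = i then r else 0) *\<^sub>R w (Some j)) = (\<Sum>j\<in>-N. if j = i then r *\<^sub>R w (Some j) else 0)"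
        by (rule sum.cong) auto
      also have "\<dots> = r *\<^sub>R w (Some i)" using that by simp
      finally show ?thesis using Lmem[of "\<lambda>j. if j = i then r else 0"] by simp
    qed
    have "feasW u y N \<sigma>" unfolding feasW_def
    proof (intro exI[of _ a] conjI allI impI ballI)
      fix i assume iN: "i \<notin> N"
      have p0: "f None \<in> P0" using fin N'_def by simp
      have gt: "inner a (f None) + r * inner a (w (Some i)) > bb" for r
      proof -
        have "f None + r *\<^sub>R w (Some i) \<in> S" using p0 L1[OF iN] unfolding S_def by blast
        then have "bb < a \<bullet> (f None + r *\<^sub>R w (Some i))" using ab(3) by blast
        then show ?thesis by (simp add: inner_add_right)
      qed
      show "wv u y (Some i) \<bullet> a = 0"
      proof (rule ccontr)
        assume ne: "wv u y (Some i) \<bullet> a \<noteq> 0"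
        then have ne': "inner a (w (Some i)) \<noteq> 0" unfolding w_def by (simp add: inner_commute)
        have "inner a (f None) + (- inner a (f None) / inner a (w (Some i))) * inner a (w (Some i)) > bb"
          by (rule gt)
        then show False using ne' ab(2) by simp
      qed
    next
      fix k assume kN: "k \<in> insert None (Some ` N)"
      then have "inner a (f k) > bb" using Sf N'_def ab(3) by blast
      then show "sg \<sigma> k * (wv u y k \<bullet> a) > 0" using ab(2) unfolding f_def w_def
        by (simp add: inner_commute)
    qed
    then show False using nf by blast
  qed
  then obtain p l where pl: "p \<in> P0" "l \<in> L" "p + l = 0" unfolding S_def by auto
  obtain \<mu> where mu: "p = (\<Sum>k\<in>N'. \<mu> k *\<^sub>R f k)" "\<forall>k\<in>N'. \<mu> k \<ge> 0" "sum \<mu> N' = 1"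
    using pl(1) P0P P_def by blast
  obtain lam where lam: "l = (\<Sum>i\<in>-N. lam i *\<^sub>R w (Some i))" using pl(2) L_def by blast
  define e where "e k = (if k \<in> N' then \<mu> k * sg \<sigma> k else (case k of Some i \<Rightarrow> lam i | None \<Rightarrow> 0))" for k
  have compl: "UNIV - N' = Some ` (-N)"
  proof -
    have "k \<in> UNIV - N' \<longleftrightarrow> k \<in> Some ` (-N)" for k unfolding N'_def by (cases k) auto
    then show ?thesis by blast
  qed
  have "(\<Sum>k\<in>UNIV. e k *\<^sub>R w k) = (\<Sum>k\<in>UNIV - N'. e k *\<^sub>R w k) + (\<Sum>k\<in>N'. e k *\<^sub>R w k)"
    by (rule sum.subset_diff) auto
  also have "(\<Sum>k\<in>N'. e k *\<^sub>R w k) = p"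
    unfolding mu(1) f_def e_def by (rule sum.cong) auto
  also have "(\<Sum>k\<in>UNIV - N'. e k *\<^sub>R w k) = (\<Sum>i\<in>-N. e (Some i) *\<^sub>R w (Some i))"
    unfolding compl by (simp add: sum.reindex)
  also have "\<dots> = l" unfolding lam e_def N'_def by (rule sum.cong) auto
  finally have ker: "kerW u y e" unfolding kerW_def w_def using pl(3) by (simp add: add.commute)
  have conf: "\<forall>k\<in>N'. 0 \<le> e k * sg \<sigma> k"
  proof
    fix k assume k: "k \<in> N'"
    have "e k * sg \<sigma> k = \<mu> k * (sg \<sigma> k * sg \<sigma> k)" unfolding e_def using k by simp
    then show "0 \<le> e k * sg \<sigma> k" using sN[OF k] mu(2) k by simp
  qed
  have "\<exists>k\<in>N'. \<mu> k \<noteq> 0"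
  proof (rule ccontr)
    assume "\<not> (\<exists>k\<in>N'. \<mu> k \<noteq> 0)"
    then have "sum \<mu> N' = 0" by simp
    then show False using mu(3) by simp
  qed
  then obtain k where k: "k \<in> N'" "\<mu> k \<noteq> 0" by blast
  have "e k \<noteq> 0" using k sN[OF k(1)] unfolding e_def by auto
  then have "certW u y N \<sigma> e" unfolding certW_def using ker conf k(1) N'_def by blast
  then show ?thesis by blast
qed




definition feas :: "('m::finite \<Rightarrow> real^'n) \<Rightarrow> real^'m \<Rightarrow> 'm set \<Rightarrow> ('m \<Rightarrow> real) \<Rightarrow> bool" where
  "feas u y N \<sigma> \<longleftrightarrow> (\<exists>x. (\<forall>i. i \<notin> N \<longrightarrow> u i \<bullet> x = y$i) \<and> (\<forall>i\<in>N. \<sigma> i * (u i \<bullet> x - y$i) > 0))"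

lemma feas_feasW: "feas u y N \<sigma> \<Longrightarrow> feasW u y N \<sigma>"
proof -
  assume "feas u y N \<sigma>"
  then obtain x where x: "\<forall>i. i \<notin> N \<longrightarrow> u i \<bullet> x = y$i" "\<forall>i\<in>N. \<sigma> i * (u i \<bullet> x - y$i) > 0"
    unfolding feas_def by blast
  have w: "wv u y (Some i) \<bullet> (x, 1) = u i \<bullet> x - y$i" for i by (simp add: wv_def)
  have "\<forall>i. i \<notin> N \<longrightarrow> wv u y (Some i) \<bullet> (x,1) = 0" using x(1) w by simp
  moreover have "\<forall>k\<in>insert None (Some ` N). sg \<sigma> k * (wv u y k \<bullet> (x,1)) > 0"
    using x(2) w by (auto simp: sg_def wv_def)
  ultimately show ?thesis unfolding feasW_def by blast
qed

lemma feasW_feas: "feasW u y N \<sigma> \<Longrightarrow> feas u y N \<sigma>"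
proof -
  assume "feasW u y N \<sigma>"
  then obtain z where z0: "\<forall>i. i \<notin> N \<longrightarrow> wv u y (Some i) \<bullet> z = 0"
    and z1: "\<forall>k\<in>insert None (Some ` N). sg \<sigma> k * (wv u y k \<bullet> z) > 0"
    unfolding feasW_def by blast
  obtain x s where zs: "z = (x, s)" by (cases z)
  have s: "s > 0" using z1 zs by (auto simp: sg_def wv_def)
  have w: "wv u y (Some i) \<bullet> z = u i \<bullet> x - s * y$i" for i using zs by (simp add: wv_def)
  define x' where "x' = (1/s) *\<^sub>R x"
  have w': "u i \<bullet> x' - y$i = (u i \<bullet> x - s * y$i) / s" for i
    using s unfolding x'_def by (simp add: field_simps)
  have "\<forall>i. i \<notin> N \<longrightarrow> u i \<bullet> x' = y$i"
  proof (intro allI impI)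
    fix i assume "i \<notin> N"
    then have "u i \<bullet> x - s * y$i = 0" using z0 w by metis
    then have "u i \<bullet> x' - y$i = 0" using w'[of i] by simp
    then show "u i \<bullet> x' = y$i" by simp
  qed
  moreover have "\<forall>i\<in>N. \<sigma> i * (u i \<bullet> x' - y$i) > 0"
  proof
    fix i assume i: "i \<in> N"
    have "\<sigma> i * (u i \<bullet> x - s * y$i) > 0" using z1 i w by (auto simp: sg_def)
    then have "(\<sigma> i * (u i \<bullet> x - s * y$i)) / s > 0" using s by simp
    then show "\<sigma> i * (u i \<bullet> x' - y$i) > 0" using w' by simp
  qed
  ultimately show ?thesis unfolding feas_def by blast
qed

lemma circ_prop:
  fixes u :: "'m::finite \<Rightarrow> real^'n"
  assumes C: "circuit u C"
    and c: "(\<Sum>i\<in>UNIV. (c $ i) *\<^sub>R u i) = 0" "\<forall>i. c $ i \<noteq> 0 \<longleftrightarrow> i \<in> C"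
    and d: "(\<Sum>i\<in>UNIV. (d $ i) *\<^sub>R u i) = 0" "\<forall>i. d $ i \<noteq> 0 \<longleftrightarrow> i \<in> C"
  shows "\<exists>\<mu>. \<mu> \<noteq> 0 \<and> d = \<mu> *\<^sub>R c"
proof -
  obtain i0 where i0: "i0 \<in> C" using C unfolding circuit_def lin_dep_fam_def by blast
  define \<mu> where "\<mu> = d$i0 / c$i0"
  define e where "e = d - \<mu> *\<^sub>R c"
  have ci0: "c$i0 \<noteq> 0" "d$i0 \<noteq> 0" using c d i0 by auto
  have "e = 0"
  proof (rule ccontr)
    assume enz: "e \<noteq> 0"
    define E where "E = {i. e$i \<noteq> 0}"
    have "E \<subseteq> C" unfolding E_def e_def using c(2) d(2) by auto
    moreover have "i0 \<notin> E" unfolding E_def e_def \<mu>_def using ci0 by simp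
    ultimately have EC: "E \<subset> C" using i0 by blast
    have m: "(\<Sum>i\<in>UNIV. (\<mu> * c $ i) *\<^sub>R u i) = \<mu> *\<^sub>R (\<Sum>i\<in>UNIV. (c $ i) *\<^sub>R u i)"
      by (simp add: scaleR_sum_right)
    have sume: "(\<Sum>i\<in>UNIV. (e $ i) *\<^sub>R u i) = 0"
      unfolding e_def using c(1) d(1) m
      by (simp add: scaleR_diff_left sum_subtractf)
    have "lin_dep_fam u E" unfolding lin_dep_fam_def
    proof (intro exI conjI)
      show "(\<Sum>i\<in>E. (e $ i) *\<^sub>R u i) = 0"
        using sume by (subst sum.mono_neutral_left[of UNIV E]) (auto simp: E_def)
      show "\<exists>i\<in>E. e $ i \<noteq> 0" using enz unfolding E_def by (auto simp: vec_eq_iff)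
    qed
    then show False using C EC unfolding circuit_def by blast
  qed
  then have "d = \<mu> *\<^sub>R c" unfolding e_def by simp
  moreover have "\<mu> \<noteq> 0" using ci0 unfolding \<mu>_def by simp
  ultimately show ?thesis by blast
qed

lemma circ_sgn:
  fixes u :: "'m::finite \<Rightarrow> real^'n"
  assumes H: "\<forall>C. circuit u C \<longrightarrow> sgn (circuit_vec u C \<bullet> a) = sgn (circuit_vec u C \<bullet> b)"
    and C: "circuit u C"
    and d: "(\<Sum>i\<in>UNIV. (d $ i) *\<^sub>R u i) = 0" "\<forall>i. d $ i \<noteq> 0 \<longleftrightarrow> i \<in> C"
  shows "sgn (d \<bullet> a) = sgn (d \<bullet> b)"
proof -
  let ?c = "circuit_vec u C"
  have "\<exists>c. (\<Sum>i\<in>UNIV. (c $ i) *\<^sub>R u i) = 0 \<and> (\<forall>i. c $ i \<noteq> 0 \<longleftrightarrow> i \<in> C)" using d by blast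
  then have cs: "(\<Sum>i\<in>UNIV. (?c $ i) *\<^sub>R u i) = 0 \<and> (\<forall>i. ?c $ i \<noteq> 0 \<longleftrightarrow> i \<in> C)"
    unfolding circuit_vec_def by (rule someI_ex)
  obtain \<mu> where "d = \<mu> *\<^sub>R ?c" using circ_prop[OF C conjunct1[OF cs] conjunct2[OF cs] d] by blast
  then have "d \<bullet> a = \<mu> * (?c \<bullet> a)" "d \<bullet> b = \<mu> * (?c \<bullet> b)" by simp_all
  then show ?thesis using H C by (simp add: sgn_mult)
qed

lemma transfer_cert:
  fixes u :: "'m::finite \<Rightarrow> real^'n"
  assumes H: "\<forall>C. circuit u C \<longrightarrow> sgn (circuit_vec u C \<bullet> a) = sgn (circuit_vec u C \<bullet> b)"
    and ce: "certW u b N \<sigma> e" and C: "circuit u {i. e (Some i) \<noteq> 0}"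
  shows "\<exists>e'. certW u a N \<sigma> e'"
proof -
  define d :: "real^'m" where "d = (\<chi> i. e (Some i))"
  have ke: "kerW u b e" and conf: "\<forall>k\<in>insert None (Some ` N). 0 \<le> e k * sg \<sigma> k"
    and enz: "\<exists>k\<in>insert None (Some ` N). e k \<noteq> 0" using ce unfolding certW_def by auto
  have sU: "(\<Sum>i\<in>UNIV. e (Some i) *\<^sub>R u i) = 0" and eN: "e None = (\<Sum>i\<in>UNIV. e (Some i) * b$i)"
    using ke kerW_iff by blast+
  have dy: "d \<bullet> y = (\<Sum>i\<in>UNIV. e (Some i) * y$i)" for y unfolding d_def inner_vec_def by simp
  have sg: "sgn (d \<bullet> a) = sgn (d \<bullet> b)"
    by (rule circ_sgn[OF H C]) (use sU in \<open>simp_all add: d_def\<close>)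
  define e' where "e' k = (case k of None \<Rightarrow> (\<Sum>i\<in>UNIV. e (Some i) * a$i) | Some i \<Rightarrow> e (Some i))" for k
  have ke': "kerW u a e'" unfolding kerW_iff e'_def using sU by simp
  have e'None: "sgn (e' None) = sgn (e None)" using sg dy eN unfolding e'_def by simp
  have "\<forall>k\<in>insert None (Some ` N). 0 \<le> e' k * sg \<sigma> k"
  proof
    fix k assume k: "k \<in> insert None (Some ` N)"
    show "0 \<le> e' k * sg \<sigma> k"
    proof (cases k)
      case None
      have "0 \<le> e None" using conf None k by (simp add: sg_def)
      then have "0 \<le> e' None" using e'None by (auto simp: sgn_if split: if_splits)
      then show ?thesis using None by (simp add: sg_def)
    next
      case (Some i) then show ?thesis using conf k unfolding e'_def by auto
    qed
  qed
  moreover have "\<exists>k\<in>insert None (Some ` N). e' k \<noteq> 0"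
  proof -
    obtain k where k: "k \<in> insert None (Some ` N)" "e k \<noteq> 0" using enz by blast
    show ?thesis
    proof (cases k)
      case None
      then have "e None \<noteq> 0" using k by simp
      then have "e' None \<noteq> 0" using e'None by (auto simp: sgn_if split: if_splits)
      then show ?thesis using None k by blast
    next
      case (Some i) then show ?thesis using k unfolding e'_def by auto
    qed
  qed
  ultimately show ?thesis using ke' unfolding certW_def by blast
qed

lemma KL:
  fixes u :: "'m::finite \<Rightarrow> real^'n"
  assumes H: "\<forall>C. circuit u C \<longrightarrow> sgn (circuit_vec u C \<bullet> a) = sgn (circuit_vec u C \<bullet> b)"
    and \<sigma>: "\<forall>i\<in>N. \<sigma> i = 1 \<or> \<sigma> i = -1" and fa: "feas u a N \<sigma>"
  shows "feas u b N \<sigma>"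
proof (rule ccontr)
  assume "\<not> feas u b N \<sigma>"
  then have "\<not> feasW u b N \<sigma>" using feasW_feas by blast
  then obtain e where "certW u b N \<sigma> e" using motzkin[OF \<sigma>] by blast
  then obtain e' where e': "certW u b N \<sigma> e'" "circuit u {i. e' (Some i) \<noteq> 0}" using reduce[OF \<sigma>] by blast
  obtain e'' where "certW u a N \<sigma> e''" using transfer_cert[OF H e'] by blast
  then have "\<not> feasW u a N \<sigma>" using cert_not_feas[OF \<sigma>] by blast
  then show False using fa feas_feasW by blast
qed




lemma convex_Pol: "convex (Pol u y A B C)"
  unfolding convex_def
proof (intro ballI allI impI)
  fix x z and a b :: real
  assume x: "x \<in> Pol u y A B C" and z: "z \<in> Pol u y A B C" and ab: "0 \<le> a" "0 \<le> b" "a + b = 1"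
  have lin: "u i \<bullet> (a *\<^sub>R x + b *\<^sub>R z) = a * (u i \<bullet> x) + b * (u i \<bullet> z)" for i
    by (simp add: inner_add_right)
  have "y$i = a * y$i + b * y$i" for i using ab(3) by (metis distrib_right mult_1)
  note yy = this
  show "a *\<^sub>R x + b *\<^sub>R z \<in> Pol u y A B C" unfolding Pol_def
  proof (intro CollectI conjI ballI)
    fix i assume "i \<in> A"
    then show "u i \<bullet> (a *\<^sub>R x + b *\<^sub>R z) = y $ i" using x z lin yy[of i] unfolding Pol_def by auto
  next
    fix i assume i: "i \<in> B"
    have "a * (u i \<bullet> x) \<le> a * y$i" "b * (u i \<bullet> z) \<le> b * y$i"
      using x z i ab unfolding Pol_def by (auto intro!: mult_left_mono)
    then show "u i \<bullet> (a *\<^sub>R x + b *\<^sub>R z) \<le> y $ i" using lin[of i] yy[of i] by linarith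
  next
    fix i assume i: "i \<in> C"
    have "a * (u i \<bullet> x) \<ge> a * y$i" "b * (u i \<bullet> z) \<ge> b * y$i"
      using x z i ab unfolding Pol_def by (auto intro!: mult_left_mono)
    then show "u i \<bullet> (a *\<^sub>R x + b *\<^sub>R z) \<ge> y $ i" using lin[of i] yy[of i] by linarith
  qed
qed

definition sgK :: "'m set \<Rightarrow> 'm \<Rightarrow> real" where "sgK K i = (if i \<in> K then 1 else -1)"

lemma sgK_pm: "\<forall>i\<in>N. sgK K i = 1 \<or> sgK K i = -1" by (simp add: sgK_def)

lemma Pol_mem: "x \<in> Pol u y A B C \<longleftrightarrow> (\<forall>i\<in>A. u i \<bullet> x = y$i) \<and> (\<forall>i\<in>B. u i \<bullet> x \<le> y$i) \<and> (\<forall>i\<in>C. u i \<bullet> x \<ge> y$i)"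
  unfolding Pol_def by simp

lemma feas_iff:
  assumes part: "I \<union> J \<union> K = UNIV" "I \<inter> J = {}" "I \<inter> K = {}" "J \<inter> K = {}" and IA: "I \<subseteq> A"
  shows "feas u y (-A) (sgK K) \<longleftrightarrow> (\<exists>x\<in>Pol u y A (J - A) (K - A). \<forall>i. i \<notin> A \<longrightarrow> u i \<bullet> x \<noteq> y$i)"
proof
  assume "feas u y (-A) (sgK K)"
  then obtain x where x: "\<forall>i. i \<in> A \<longrightarrow> u i \<bullet> x = y$i" "\<forall>i\<in>-A. sgK K i * (u i \<bullet> x - y$i) > 0"
    unfolding feas_def by auto
  have "x \<in> Pol u y A (J - A) (K - A)" unfolding Pol_mem
  proof (intro conjI ballI)
    fix i assume i: "i \<in> J - A"
    then have "sgK K i * (u i \<bullet> x - y$i) > 0" using x(2) by auto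
    moreover have "sgK K i = -1" using i part(4) by (auto simp: sgK_def)
    ultimately show "u i \<bullet> x \<le> y$i" by simp
  next
    fix i assume i: "i \<in> K - A"
    then have "sgK K i * (u i \<bullet> x - y$i) > 0" using x(2) by auto
    moreover have "sgK K i = 1" using i by (auto simp: sgK_def)
    ultimately show "u i \<bullet> x \<ge> y$i" by simp
  qed (use x in auto)
  moreover have "\<forall>i. i \<notin> A \<longrightarrow> u i \<bullet> x \<noteq> y$i"
  proof (intro allI impI)
    fix i assume "i \<notin> A"
    then have "sgK K i * (u i \<bullet> x - y$i) > 0" using x(2) by auto
    then show "u i \<bullet> x \<noteq> y$i" by auto
  qed
  ultimately show "\<exists>x\<in>Pol u y A (J - A) (K - A). \<forall>i. i \<notin> A \<longrightarrow> u i \<bullet> x \<noteq> y$i" by blast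
next
  assume "\<exists>x\<in>Pol u y A (J - A) (K - A). \<forall>i. i \<notin> A \<longrightarrow> u i \<bullet> x \<noteq> y$i"
  then obtain x where x: "x \<in> Pol u y A (J - A) (K - A)" "\<forall>i. i \<notin> A \<longrightarrow> u i \<bullet> x \<noteq> y$i" by blast
  have "\<forall>i\<in>-A. sgK K i * (u i \<bullet> x - y$i) > 0"
  proof
    fix i assume i: "i \<in> -A"
    then have "i \<in> J \<or> i \<in> K" using part(1) IA by auto
    then show "sgK K i * (u i \<bullet> x - y$i) > 0"
    proof
      assume "i \<in> J"
      then have "i \<notin> K" "u i \<bullet> x \<le> y$i" using part(4) x(1) i unfolding Pol_mem by auto
      moreover have "u i \<bullet> x \<noteq> y$i" using x(2) i by auto
      ultimately show ?thesis by (simp add: sgK_def)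
    next
      assume "i \<in> K"
      then have "u i \<bullet> x \<ge> y$i" using x(1) i unfolding Pol_mem by auto
      moreover have "u i \<bullet> x \<noteq> y$i" using x(2) i by auto
      ultimately show ?thesis using \<open>i \<in> K\<close> by (simp add: sgK_def)
    qed
  qed
  then show "feas u y (-A) (sgK K)" unfolding feas_def using x(1) unfolding Pol_mem by auto
qed

lemma face_Q:
  assumes part: "I \<union> J \<union> K = UNIV" "I \<inter> J = {}" "I \<inter> K = {}" "J \<inter> K = {}" and IA: "I \<subseteq> A"
    and fe: "feas u y (-A) (sgK K)"
  shows "Pol u y A (J - A) (K - A) face_of Pol u y I J K \<and> Pol u y A (J - A) (K - A) \<noteq> {}
     \<and> act_I u y (Pol u y A (J - A) (K - A)) = A"
proof -
  define Q where "Q = Pol u y A (J - A) (K - A)"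
  define P where "P = Pol u y I J K"
  obtain x0 where x0: "x0 \<in> Q" "\<forall>i. i \<notin> A \<longrightarrow> u i \<bullet> x0 \<noteq> y$i"
    using fe feas_iff[OF part IA] Q_def by blast
  have QP: "Q \<subseteq> P" unfolding Q_def P_def Pol_def using IA by auto
  have Pmem: "x \<in> P \<Longrightarrow> i \<in> J \<Longrightarrow> u i \<bullet> x \<le> y$i" "x \<in> P \<Longrightarrow> i \<in> K \<Longrightarrow> u i \<bullet> x \<ge> y$i"
    "x \<in> P \<Longrightarrow> i \<in> I \<Longrightarrow> u i \<bullet> x = y$i" for x i unfolding P_def Pol_def by auto
  have Qmem: "x \<in> Q \<longleftrightarrow> x \<in> P \<and> (\<forall>i\<in>A. u i \<bullet> x = y$i)" for x
    unfolding Q_def P_def Pol_def using IA by auto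
  have face: "Q face_of P" unfolding face_of_def
  proof (intro conjI ballI impI)
    show "Q \<subseteq> P" by (rule QP)
    show "convex Q" unfolding Q_def by (rule convex_Pol)
  next
    fix p q x assume p: "p \<in> P" and q: "q \<in> P" and x: "x \<in> Q" and seg: "x \<in> open_segment p q"
    obtain th where th: "0 < th" "th < 1" "x = (1 - th) *\<^sub>R p + th *\<^sub>R q" using seg by (auto simp: in_segment)
    have lin: "u i \<bullet> x = (1 - th) * (u i \<bullet> p) + th * (u i \<bullet> q)" for i using th(3) by (simp add: inner_add_right)
    have eqs: "u i \<bullet> p = y$i \<and> u i \<bullet> q = y$i" if iA: "i \<in> A" for i
    proof -
      have ux: "u i \<bullet> x = y$i" using x iA Qmem by blast
      have yy: "y$i = (1 - th) * y$i + th * y$i" by (simp add: algebra_simps)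
      have "i \<in> I \<or> i \<in> J \<or> i \<in> K" using part(1) by auto
      then show ?thesis
      proof (elim disjE)
        assume "i \<in> I" then show ?thesis using Pmem p q by blast
      next
        assume iJ: "i \<in> J"
        have a1: "u i \<bullet> p \<le> y$i" "u i \<bullet> q \<le> y$i" using Pmem(1) p q iJ by auto
        have b1: "(1 - th) * (u i \<bullet> p) \<le> (1 - th) * y$i" "th * (u i \<bullet> q) \<le> th * y$i"
          using a1 th by (auto intro!: mult_left_mono)
        have "\<not> u i \<bullet> p < y$i"
        proof
          assume "u i \<bullet> p < y$i"
          then have "(1 - th) * (u i \<bullet> p) < (1 - th) * y$i" using th by (intro mult_strict_left_mono) auto
          then show False using b1 lin[of i] ux yy by linarith
        qed
        moreover have "\<not> u i \<bullet> q < y$i"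
        proof
          assume "u i \<bullet> q < y$i"
          then have "th * (u i \<bullet> q) < th * y$i" using th by (intro mult_strict_left_mono) auto
          then show False using b1 lin[of i] ux yy by linarith
        qed
        ultimately show ?thesis using a1 by linarith
      next
        assume iK: "i \<in> K"
        have a1: "u i \<bullet> p \<ge> y$i" "u i \<bullet> q \<ge> y$i" using Pmem(2) p q iK by auto
        have b1: "(1 - th) * (u i \<bullet> p) \<ge> (1 - th) * y$i" "th * (u i \<bullet> q) \<ge> th * y$i"
          using a1 th by (auto intro!: mult_left_mono)
        have "\<not> u i \<bullet> p > y$i"
        proof
          assume "u i \<bullet> p > y$i"
          then have "(1 - th) * (u i \<bullet> p) > (1 - th) * y$i" using th by (intro mult_strict_left_mono) auto
          then show False using b1 lin[of i] ux yy by linarith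
        qed
        moreover have "\<not> u i \<bullet> q > y$i"
        proof
          assume "u i \<bullet> q > y$i"
          then have "th * (u i \<bullet> q) > th * y$i" using th by (intro mult_strict_left_mono) auto
          then show False using b1 lin[of i] ux yy by linarith
        qed
        ultimately show ?thesis using a1 by linarith
      qed
    qed
    show "p \<in> Q" using p eqs Qmem by blast
    show "q \<in> Q" using q eqs Qmem by blast
  qed
  have Qne: "Q \<noteq> {}" using x0 by auto
  have act: "act_I u y Q = A"
  proof -
    define z where "z = (SOME x. x \<in> rel_interior Q)"
    have "rel_interior Q \<noteq> {}" using Qne rel_interior_eq_empty[OF convex_Pol[of u y A "J - A" "K - A"]]
      unfolding Q_def by blast
    then have zr: "z \<in> rel_interior Q" unfolding z_def by (meson ex_in_conv someI_ex)
    then have zQ: "z \<in> Q" using rel_interior_subset by blast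
    obtain e where e: "e > 1" "(1 - e) *\<^sub>R x0 + e *\<^sub>R z \<in> Q"
      using convex_rel_interior_iff[of Q z] zr x0(1) Qne convex_Pol[of u y A "J - A" "K - A"]
      unfolding Q_def by blast
    have "{i. u i \<bullet> z = y$i} = A"
    proof (intro set_eqI iffI)
      fix i assume "i \<in> A" then show "i \<in> {i. u i \<bullet> z = y$i}" using zQ Qmem by blast
    next
      fix i assume iz: "i \<in> {i. u i \<bullet> z = y$i}"
      show "i \<in> A"
      proof (rule ccontr)
        assume iA: "i \<notin> A"
        have lin: "u i \<bullet> ((1 - e) *\<^sub>R x0 + e *\<^sub>R z) = (1 - e) * (u i \<bullet> x0) + e * y$i"
          using iz by (simp add: inner_add_right)
        have ne: "u i \<bullet> x0 \<noteq> y$i" using x0(2) iA by blast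
        have "i \<in> J \<or> i \<in> K" using part(1) IA iA by auto
        then show False
        proof
          assume iJ: "i \<in> J"
          have "u i \<bullet> x0 \<le> y$i" using Pmem(1) QP x0(1) iJ by blast
          then have lt: "u i \<bullet> x0 < y$i" using ne by simp
          have "(1 - e) * (u i \<bullet> x0) > (1 - e) * y$i" using lt e(1) by (intro mult_strict_left_mono_neg) auto
          moreover have "u i \<bullet> ((1 - e) *\<^sub>R x0 + e *\<^sub>R z) \<le> y$i" using Pmem(1) QP e(2) iJ by blast
          moreover have "(1 - e) * y$i + e * y$i = y$i" by (simp add: algebra_simps)
          ultimately show False using lin by linarith
        next
          assume iK: "i \<in> K"
          have "u i \<bullet> x0 \<ge> y$i" using Pmem(2) QP x0(1) iK by blast
          then have lt: "u i \<bullet> x0 > y$i" using ne by simp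
          have "(1 - e) * (u i \<bullet> x0) < (1 - e) * y$i" using lt e(1) by (intro mult_strict_left_mono_neg) auto
          moreover have "u i \<bullet> ((1 - e) *\<^sub>R x0 + e *\<^sub>R z) \<ge> y$i" using Pmem(2) QP e(2) iK by blast
          moreover have "(1 - e) * y$i + e * y$i = y$i" by (simp add: algebra_simps)
          ultimately show False using lin by linarith
        qed
      qed
    qed
    then show ?thesis unfolding act_I_def z_def by simp
  qed
  show ?thesis using face Qne act unfolding Q_def P_def by blast
qed




lemma face_char:
  assumes part: "I \<union> J \<union> K = UNIV" "I \<inter> J = {}" "I \<inter> K = {}" "J \<inter> K = {}"
    and G: "G face_of Pol u y I J K" and Gne: "G \<noteq> {}"
  shows "I \<subseteq> act_I u y G \<and> G = Pol u y (act_I u y G) (J - act_I u y G) (K - act_I u y G)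
     \<and> feas u y (- act_I u y G) (sgK K)"
proof -
  define P where "P = Pol u y I J K"
  define z where "z = (SOME x. x \<in> rel_interior G)"
  define A where "A = act_I u y G"
  have cG: "convex G" using G face_of_imp_convex by blast
  have GP: "G \<subseteq> P" using G face_of_imp_subset P_def by blast
  have "rel_interior G \<noteq> {}" using Gne rel_interior_eq_empty[OF cG] by blast
  then have zr: "z \<in> rel_interior G" unfolding z_def by (meson ex_in_conv someI_ex)
  then have zG: "z \<in> G" using rel_interior_subset by blast
  have A: "A = {i. u i \<bullet> z = y$i}" unfolding A_def act_I_def z_def by simp
  have Pmem: "x \<in> P \<Longrightarrow> i \<in> J \<Longrightarrow> u i \<bullet> x \<le> y$i" "x \<in> P \<Longrightarrow> i \<in> K \<Longrightarrow> u i \<bullet> x \<ge> y$i"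
    "x \<in> P \<Longrightarrow> i \<in> I \<Longrightarrow> u i \<bullet> x = y$i" for x i unfolding P_def Pol_def by auto
  have zP: "z \<in> P" using zG GP by blast
  have IA: "I \<subseteq> A" using Pmem(3)[OF zP] A by auto
  define Q where "Q = Pol u y A (J - A) (K - A)"
  have Qmem: "x \<in> Q \<longleftrightarrow> x \<in> P \<and> (\<forall>i\<in>A. u i \<bullet> x = y$i)" for x
    unfolding Q_def P_def Pol_def using IA by auto
  have zQ: "z \<in> Q" using zP A Qmem by blast
  have zs: "\<forall>i. i \<notin> A \<longrightarrow> u i \<bullet> z \<noteq> y$i" using A by auto
  have fe: "feas u y (-A) (sgK K)" using feas_iff[OF part IA] zQ zs Q_def by blast
  have GQ: "G \<subseteq> Q"
  proof
    fix x assume xG: "x \<in> G"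
    obtain e where e: "e > 1" "(1 - e) *\<^sub>R x + e *\<^sub>R z \<in> G"
      using convex_rel_interior_iff[OF cG Gne] zr xG by blast
    have wP: "(1 - e) *\<^sub>R x + e *\<^sub>R z \<in> P" using e(2) GP by blast
    have xP: "x \<in> P" using xG GP by blast
    have "u i \<bullet> x = y$i" if iA: "i \<in> A" for i
    proof -
      have uz: "u i \<bullet> z = y$i" using iA A by blast
      have lin: "u i \<bullet> ((1 - e) *\<^sub>R x + e *\<^sub>R z) = (1 - e) * (u i \<bullet> x) + e * y$i"
        using uz by (simp add: inner_add_right)
      have yy: "(1 - e) * y$i + e * y$i = y$i" by (simp add: algebra_simps)
      have "i \<in> I \<or> i \<in> J \<or> i \<in> K" using part(1) by auto
      then show ?thesis
      proof (elim disjE)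
        assume "i \<in> I" then show ?thesis using Pmem(3) xP by blast
      next
        assume iJ: "i \<in> J"
        have a1: "u i \<bullet> x \<le> y$i" using Pmem(1) xP iJ by blast
        have a2: "u i \<bullet> ((1 - e) *\<^sub>R x + e *\<^sub>R z) \<le> y$i" using Pmem(1) wP iJ by blast
        show ?thesis
        proof (rule ccontr)
          assume "u i \<bullet> x \<noteq> y$i"
          then have "u i \<bullet> x < y$i" using a1 by simp
          then have "(1 - e) * (u i \<bullet> x) > (1 - e) * y$i" using e(1) by (intro mult_strict_left_mono_neg) auto
          then show False using a2 lin yy by linarith
        qed
      next
        assume iK: "i \<in> K"
        have a1: "u i \<bullet> x \<ge> y$i" using Pmem(2) xP iK by blast
        have a2: "u i \<bullet> ((1 - e) *\<^sub>R x + e *\<^sub>R z) \<ge> y$i" using Pmem(2) wP iK by blast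
        show ?thesis
        proof (rule ccontr)
          assume "u i \<bullet> x \<noteq> y$i"
          then have "u i \<bullet> x > y$i" using a1 by simp
          then have "(1 - e) * (u i \<bullet> x) < (1 - e) * y$i" using e(1) by (intro mult_strict_left_mono_neg) auto
          then show False using a2 lin yy by linarith
        qed
      qed
    qed
    then show "x \<in> Q" using Qmem xP by blast
  qed
  have QG: "Q \<subseteq> G"
  proof
    fix x assume xQ: "x \<in> Q"
    show "x \<in> G"
    proof (cases "x = z")
      case True then show ?thesis using zG by simp
    next
      case False
      have xP: "x \<in> P" using xQ Qmem by blast
      define w where "w t = z + t *\<^sub>R (z - x)" for t :: real
      have ev: "eventually (\<lambda>t. (i \<in> J \<longrightarrow> u i \<bullet> w t \<le> y$i) \<and> (i \<in> K \<longrightarrow> u i \<bullet> w t \<ge> y$i)) (at_right 0)" for i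
      proof (cases "i \<in> A")
        case True
        have "u i \<bullet> w t = y$i" for t using True A Qmem xQ unfolding w_def by (simp add: inner_add_right inner_diff_right)
        then show ?thesis by simp
      next
        case False
        have wl: "u i \<bullet> w t = u i \<bullet> z + t * (u i \<bullet> z - u i \<bullet> x)" for t unfolding w_def by (simp add: inner_add_right inner_diff_right)
        have tl: "((\<lambda>t. u i \<bullet> w t) \<longlongrightarrow> u i \<bullet> z) (at_right 0)"
          unfolding wl by (auto intro!: tendsto_eq_intros)
        have ne: "u i \<bullet> z \<noteq> y$i" using False A by blast
        have "i \<in> J \<or> i \<in> K" using part(1) IA False by auto
        then show ?thesis
        proof
          assume iJ: "i \<in> J"
          then have "i \<notin> K" using part(4) by auto
          have "u i \<bullet> z < y$i" using Pmem(1)[OF zP iJ] ne by simp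
          then have "eventually (\<lambda>t. u i \<bullet> w t < y$i) (at_right 0)" using order_tendstoD(2)[OF tl] by blast
          then show ?thesis using iJ \<open>i \<notin> K\<close> by (auto elim: eventually_mono)
        next
          assume iK: "i \<in> K"
          then have "i \<notin> J" using part(4) by auto
          have "u i \<bullet> z > y$i" using Pmem(2)[OF zP iK] ne by simp
          then have "eventually (\<lambda>t. u i \<bullet> w t > y$i) (at_right 0)" using order_tendstoD(1)[OF tl] by blast
          then show ?thesis using iK \<open>i \<notin> J\<close> by (auto elim: eventually_mono)
        qed
      qed
      define R where "R t i = ((i \<in> J \<longrightarrow> u i \<bullet> w t \<le> y$i) \<and> (i \<in> K \<longrightarrow> u i \<bullet> w t \<ge> y$i))" for t i
      have ev2: "eventually (\<lambda>t. \<forall>i. R t i) (at_right 0)"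
        by (rule eventually_all_finite) (use ev in \<open>simp add: R_def\<close>)
      have "eventually (\<lambda>t. t > 0 \<and> (\<forall>i. R t i)) (at_right (0::real))"
        using ev2 eventually_at_right_less[of 0] by (simp add: eventually_conj_iff)
      then have "eventually (\<lambda>t. t > 0 \<and> (\<forall>i. (i \<in> J \<longrightarrow> u i \<bullet> w t \<le> y$i) \<and> (i \<in> K \<longrightarrow> u i \<bullet> w t \<ge> y$i))) (at_right (0::real))"
        unfolding R_def by simp
      then have "\<exists>t. t > 0 \<and> (\<forall>i. (i \<in> J \<longrightarrow> u i \<bullet> w t \<le> y$i) \<and> (i \<in> K \<longrightarrow> u i \<bullet> w t \<ge> y$i))"
        by (rule eventually_happens'[rotated]) simp
      then obtain t where t: "t > 0" "\<forall>i. (i \<in> J \<longrightarrow> u i \<bullet> w t \<le> y$i) \<and> (i \<in> K \<longrightarrow> u i \<bullet> w t \<ge> y$i)"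
        by blast
      have wIeq: "u i \<bullet> w t = y$i" if "i \<in> I" for i
        using that IA A Qmem xQ unfolding w_def by (auto simp: inner_add_right inner_diff_right)
      have wP: "w t \<in> P" unfolding P_def Pol_def using t(2) wIeq by auto
      define th where "th = 1 / (1 + t)"
      have th: "0 < th" "th < 1" using t(1) unfolding th_def by auto
      have "(1 - th) *\<^sub>R x + th *\<^sub>R w t = z"
      proof -
        have h1: "1 - th = th * t" using t(1) unfolding th_def by (simp add: field_simps)
        have h2: "th * (1 + t) = 1" using t(1) unfolding th_def by (simp add: field_simps)
        have "th *\<^sub>R w t = th *\<^sub>R z + (th * t) *\<^sub>R z - (th * t) *\<^sub>R x"
          unfolding w_def by (simp add: scaleR_add_right scaleR_diff_right)
        also have "th *\<^sub>R z + (th * t) *\<^sub>R z = (th * (1 + t)) *\<^sub>R z" by (simp add: scaleR_add_left distrib_left)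
        finally have "th *\<^sub>R w t = z - (th * t) *\<^sub>R x" using h2 by simp
        then show ?thesis using h1 by simp
      qed
      moreover have "x \<noteq> w t"
      proof
        assume "x = w t"
        then have "(1 + t) *\<^sub>R (x - z) = 0" unfolding w_def by (simp add: algebra_simps)
        then show False using False t(1) by simp
      qed
      ultimately have "z \<in> open_segment x (w t)" using th by (auto simp: in_segment)
      moreover have "x \<in> Pol u y I J K" "w t \<in> Pol u y I J K" using xP wP P_def by auto
      ultimately show "x \<in> G" using face_ofD[OF G _ _ _ zG] by blast
    qed
  qed
  have "G = Q" using GQ QG by blast
  then show ?thesis using IA fe unfolding A_def Q_def by blast
qed




lemma sgn1: "sgn (r::real) = 1 \<Longrightarrow> r > 0" by (auto simp: sgn_if split: if_splits)
lemma sgnm1: "sgn (r::real) = -1 \<Longrightarrow> r < 0" by (auto simp: sgn_if split: if_splits)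

lemma cell_closure:
  fixes u :: "'m::finite \<Rightarrow> real^'n"
  assumes S: "S = {y. \<forall>C. circuit u C \<longrightarrow> sgn (circuit_vec u C \<bullet> y) = \<epsilon> C}" and ne: "S \<noteq> {}"
    and C: "circuit u C" and y: "y \<in> closure S"
  shows "sgn (circuit_vec u C \<bullet> y) = 0 \<or> sgn (circuit_vec u C \<bullet> y) = \<epsilon> C"
proof -
  let ?c = "circuit_vec u C"
  obtain y0 where "y0 \<in> S" using ne by blast
  then have e: "\<epsilon> C = sgn (?c \<bullet> y0)" using S C by auto
  have mem: "sgn (?c \<bullet> x) = \<epsilon> C" if "x \<in> S" for x using that S C by auto
  consider "\<epsilon> C = 1" | "\<epsilon> C = -1" | "\<epsilon> C = 0" using e by (auto simp: sgn_if split: if_splits)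
  then show ?thesis
  proof cases
    case 1
    have "S \<subseteq> {x. ?c \<bullet> x \<ge> 0}" using mem 1 sgn1 by (auto intro: less_imp_le)
    then have "closure S \<subseteq> {x. ?c \<bullet> x \<ge> 0}" by (intro closure_minimal) (auto simp: closed_halfspace_ge)
    then have "?c \<bullet> y \<ge> 0" using y by auto
    then show ?thesis using 1 by (auto simp: sgn_if)
  next
    case 2
    have "S \<subseteq> {x. ?c \<bullet> x \<le> 0}" using mem 2 sgnm1 by (auto intro: less_imp_le)
    then have "closure S \<subseteq> {x. ?c \<bullet> x \<le> 0}" by (intro closure_minimal) (auto simp: closed_halfspace_le)
    then have "?c \<bullet> y \<le> 0" using y by auto
    then show ?thesis using 2 by (auto simp: sgn_if)
  next
    case 3
    have "S \<subseteq> {x. ?c \<bullet> x = 0}"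
    proof
      fix x assume "x \<in> S"
      then have "sgn (?c \<bullet> x) = 0" using mem 3 by simp
      then show "x \<in> {x. ?c \<bullet> x = 0}" by (simp add: sgn_eq_0_iff)
    qed
    then have "closure S \<subseteq> {x. ?c \<bullet> x = 0}" by (intro closure_minimal) (auto simp: closed_hyperplane)
    then have "?c \<bullet> y = 0" using y by auto
    then show ?thesis by simp
  qed
qed

lemma open_face_unique:
  fixes u :: "'m::finite \<Rightarrow> real^'n"
  assumes S0: "derived_open_face u S0" and S1: "derived_open_face u S1" and cl: "closure S1 = closure S0"
  shows "S1 = S0"
proof -
  obtain e0 where e0: "S0 \<noteq> {}" "S0 = {y. \<forall>C. circuit u C \<longrightarrow> sgn (circuit_vec u C \<bullet> y) = e0 C}"
    using S0 unfolding derived_open_face_def by blast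
  obtain e1 where e1: "S1 \<noteq> {}" "S1 = {y. \<forall>C. circuit u C \<longrightarrow> sgn (circuit_vec u C \<bullet> y) = e1 C}"
    using S1 unfolding derived_open_face_def by blast
  obtain y0 where y0: "y0 \<in> S0" using e0 by blast
  obtain y1 where y1: "y1 \<in> S1" using e1 by blast
  have eq: "e0 C = e1 C" if C: "circuit u C" for C
  proof -
    have "y1 \<in> closure S0" using y1 cl closure_subset by blast
    then have "sgn (circuit_vec u C \<bullet> y1) = 0 \<or> sgn (circuit_vec u C \<bullet> y1) = e0 C"
      by (rule cell_closure[OF e0(2) e0(1) C])
    moreover have "sgn (circuit_vec u C \<bullet> y1) = e1 C" using y1 e1(2) C by auto
    ultimately have a: "e1 C = 0 \<or> e1 C = e0 C" by auto
    have "y0 \<in> closure S1" using y0 cl closure_subset by blast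
    then have "sgn (circuit_vec u C \<bullet> y0) = 0 \<or> sgn (circuit_vec u C \<bullet> y0) = e1 C"
      by (rule cell_closure[OF e1(2) e1(1) C])
    moreover have "sgn (circuit_vec u C \<bullet> y0) = e0 C" using y0 e0(2) C by auto
    ultimately have b: "e0 C = 0 \<or> e0 C = e1 C" by auto
    show ?thesis using a b by auto
  qed
  show ?thesis unfolding e0(2) e1(2) using eq by auto
qed

lemma relint_signs:
  fixes u :: "'m::finite \<Rightarrow> real^'n"
  assumes F: "derived_face u F" and a: "a \<in> derived_relint u F" and b: "b \<in> derived_relint u F"
  shows "\<forall>C. circuit u C \<longrightarrow> sgn (circuit_vec u C \<bullet> a) = sgn (circuit_vec u C \<bullet> b)"
proof -
  obtain S0 where S0: "derived_open_face u S0" "F = closure S0" using F unfolding derived_face_def by blast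
  have "derived_relint u F = S0" unfolding derived_relint_def
  proof (rule the_equality)
    show "derived_open_face u S0 \<and> closure S0 = F" using S0 by simp
    show "\<And>S. derived_open_face u S \<and> closure S = F \<Longrightarrow> S = S0"
      using open_face_unique S0 by blast
  qed
  then have ab: "a \<in> S0" "b \<in> S0" using a b by auto
  obtain e0 where e0: "S0 = {y. \<forall>C. circuit u C \<longrightarrow> sgn (circuit_vec u C \<bullet> y) = e0 C}"
    using S0(1) unfolding derived_open_face_def by blast
  show ?thesis using ab e0 by auto
qed




lemma phi_props:
  fixes u :: "'m::finite \<Rightarrow> real^'n"
  assumes Hs: "\<forall>C. circuit u C \<longrightarrow> sgn (circuit_vec u C \<bullet> a) = sgn (circuit_vec u C \<bullet> b)"
    and part: "I \<union> J \<union> K = UNIV" "I \<inter> J = {}" "I \<inter> K = {}" "J \<inter> K = {}"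
    and G: "G face_of Pol u a I J K" and Gne: "G \<noteq> {}"
  shows "Phi u a b J K G face_of Pol u b I J K \<and> Phi u a b J K G \<noteq> {}
     \<and> act_I u b (Phi u a b J K G) = act_I u a G"
proof -
  define A where "A = act_I u a G"
  have fc: "I \<subseteq> A" "G = Pol u a A (J - A) (K - A)" "feas u a (-A) (sgK K)"
    using face_char[OF part G Gne] unfolding A_def by auto
  have fb: "feas u b (-A) (sgK K)" by (rule KL[OF Hs sgK_pm fc(3)])
  have "Phi u a b J K G = Pol u b A (J - A) (K - A)" unfolding Phi_def A_def using Gne by simp
  then show ?thesis using face_Q[OF part fc(1) fb] unfolding A_def by simp
qed

theorem mainTheorem10:
  fixes u :: "'m::finite \<Rightarrow> real^'n"
    and a b :: "real^'m"
    and F :: "(real^'m) set"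
    and I J K :: "'m set"
  assumes nonzero: "\<forall>i. u i \<noteq> 0"
    and F: "derived_face u F"
    and ab: "a \<in> derived_relint u F" "b \<in> derived_relint u F"
    and part: "I \<union> J \<union> K = UNIV" "I \<inter> J = {}" "I \<inter> K = {}" "J \<inter> K = {}"
  shows "(\<forall>G. G face_of Pol u a I J K \<longrightarrow> Phi u a b J K G face_of Pol u b I J K)
    \<and> bij_betw (Phi u a b J K) {G. G face_of Pol u a I J K} {G. G face_of Pol u b I J K}
    \<and> (\<forall>G. G face_of Pol u a I J K \<and> G \<noteq> {} \<longrightarrow>
          Phi u a b J K G \<noteq> {}
        \<and> act_I u b (Phi u a b J K G) = act_I u a G
        \<and> J - act_I u b (Phi u a b J K G) = J - act_I u a G
        \<and> K - act_I u b (Phi u a b J K G) = K - act_I u a G)"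
proof -
  have Hs: "\<forall>C. circuit u C \<longrightarrow> sgn (circuit_vec u C \<bullet> a) = sgn (circuit_vec u C \<bullet> b)"
    by (rule relint_signs[OF F ab])
  have Hs': "\<forall>C. circuit u C \<longrightarrow> sgn (circuit_vec u C \<bullet> b) = sgn (circuit_vec u C \<bullet> a)"
    using Hs by simp
  have Phi0: "Phi u a b J K {} = {}" unfolding Phi_def by simp
  have P1: "\<forall>G. G face_of Pol u a I J K \<longrightarrow> Phi u a b J K G face_of Pol u b I J K"
  proof (intro allI impI)
    fix G assume G: "G face_of Pol u a I J K"
    show "Phi u a b J K G face_of Pol u b I J K"
    proof (cases "G = {}")
      case True then show ?thesis using Phi0 by simp
    next
      case False then show ?thesis using phi_props[OF Hs part G] by blast
    qed
  qed
  have P3: "\<forall>G. G face_of Pol u a I J K \<and> G \<noteq> {} \<longrightarrow>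
          Phi u a b J K G \<noteq> {}
        \<and> act_I u b (Phi u a b J K G) = act_I u a G
        \<and> J - act_I u b (Phi u a b J K G) = J - act_I u a G
        \<and> K - act_I u b (Phi u a b J K G) = K - act_I u a G"
    using phi_props[OF Hs part] by auto
  have inj: "inj_on (Phi u a b J K) {G. G face_of Pol u a I J K}"
  proof (rule inj_onI)
    fix G1 G2 assume G1: "G1 \<in> {G. G face_of Pol u a I J K}" and G2: "G2 \<in> {G. G face_of Pol u a I J K}"
      and eq: "Phi u a b J K G1 = Phi u a b J K G2"
    show "G1 = G2"
    proof (cases "G1 = {}")
      case True
      then have "Phi u a b J K G2 = {}" using eq Phi0 by simp
      then show ?thesis using True phi_props[OF Hs part, of G2] G2 by blast
    next
      case n1: False
      show ?thesis
      proof (cases "G2 = {}")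
        case True
        then have "Phi u a b J K G1 = {}" using eq Phi0 by simp
        then show ?thesis using n1 phi_props[OF Hs part, of G1] G1 by blast
      next
        case n2: False
        have "act_I u a G1 = act_I u a G2"
          using phi_props[OF Hs part, of G1] phi_props[OF Hs part, of G2] G1 G2 n1 n2 eq by auto
        moreover have "G1 = Pol u a (act_I u a G1) (J - act_I u a G1) (K - act_I u a G1)"
          using face_char[OF part _ n1] G1 by blast
        moreover have "G2 = Pol u a (act_I u a G2) (J - act_I u a G2) (K - act_I u a G2)"
          using face_char[OF part _ n2] G2 by blast
        ultimately show ?thesis by simp
      qed
    qed
  qed
  have img: "Phi u a b J K ` {G. G face_of Pol u a I J K} = {G. G face_of Pol u b I J K}"
  proof
    show "Phi u a b J K ` {G. G face_of Pol u a I J K} \<subseteq> {G. G face_of Pol u b I J K}" using P1 by blast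
  next
    show "{G. G face_of Pol u b I J K} \<subseteq> Phi u a b J K ` {G. G face_of Pol u a I J K}"
    proof
      fix H assume H: "H \<in> {G. G face_of Pol u b I J K}"
      show "H \<in> Phi u a b J K ` {G. G face_of Pol u a I J K}"
      proof (cases "H = {}")
        case True
        have "{} \<in> {G. G face_of Pol u a I J K}" by simp
        then show ?thesis using True Phi0 by (metis image_eqI)
      next
        case False
        define B where "B = act_I u b H"
        have fc: "I \<subseteq> B" "H = Pol u b B (J - B) (K - B)" "feas u b (-B) (sgK K)"
          using face_char[OF part _ False] H unfolding B_def by auto
        have fa: "feas u a (-B) (sgK K)" by (rule KL[OF Hs' sgK_pm fc(3)])
        define G where "G = Pol u a B (J - B) (K - B)"
        have Gp: "G face_of Pol u a I J K" "G \<noteq> {}" "act_I u a G = B"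
          using face_Q[OF part fc(1) fa] unfolding G_def by auto
        have "Phi u a b J K G = Pol u b B (J - B) (K - B)" unfolding Phi_def using Gp by simp
        then have "Phi u a b J K G = H" using fc(2) by simp
        then show ?thesis using Gp(1) by blast
      qed
    qed
  qed
  show ?thesis using P1 P3 inj img unfolding bij_betw_def by blast
qed


end
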